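(* Let $\eta_\varepsilon$ be as in the context. Fix $B>0$, $a\in(-1,1)$, $b\in(-1,1)$ and arbitrary real numbers $\dot a,\dot b,\dot B$ (treated as independent real parameters). Put $z=\varepsilon^{-1}B(x-a)$ and define $$ L_\varepsilon=\frac{\varepsilon\dot b}{\sqrt{1-b^2}}\int_{\mathbb R}\eta_\varepsilon^2(x)\tanh(z)\,dx+b\sqrt{1-b^2}\,B\dot a\int_{\mathbb R}\eta_\varepsilon^2(x)\,\mathrm{sech}^2(z)\,dx-\varepsilon b\sqrt{1-b^2}\,\dot B B^{-1}\int_{\mathbb R}\eta_\varepsilon^2(x)\,z\,\mathrm{sech}^2(z)\,dx $$ $$ \qquad+(1-b^2)B^2\int_{\mathbb R}\eta_\varepsilon^2(x)\,\mathrm{sech}^4(z)\,dx+\frac12(1-b^2)^2\int_{\mathbb R}\eta_\varepsilon^4(x)\,\mathrm{sech}^4(z)\,dx . $$ Then $$ \lim_{\varepsilon\to0}\frac{L_\varepsilon}{2\varepsilon}=-\frac{\dot b}{\sqrt{1-b^2}}\Big(a-\frac13a^3\Big)+b\sqrt{1-b^2}\,(1-a^2)\,\dot a+\frac23(1-a^2)(1-b^2)B+\frac{1}{3B}(1-a^2)^2(1-b^2)^2 . $$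
   Context: For all sufficiently small $\varepsilon>0$, $\eta_\varepsilon:\mathbb R\to(0,\infty)$ is a smooth solution of $\varepsilon^2\eta_\varepsilon''+(1-x^2-\eta_\varepsilon^2)\eta_\varepsilon=0$ on $\mathbb R$ that decays to zero as $|x|\to\infty$ faster than any exponential, and it has the following properties: $\eta_\varepsilon(x)\to\eta_0(x)$ pointwise as $\varepsilon\to0$, where $\eta_0(x)=(1-x^2)^{1/2}$ for $|x|<1$ and $\eta_0(x)=0$ for $|x|>1$; for every compact $K\subset(-1,1)$ there is $C_K>0$ with $\|\eta_\varepsilon-\eta_0\|_{C^1(K)}\le C_K\varepsilon^2$; and there is $C>0$ with $\|\eta_\varepsilon-\eta_0\|_{L^\infty}\le C\varepsilon^{1/3}$, $\|\eta_\varepsilon'\|_{L^\infty}\le C\varepsilon^{-1/3}$, $\|\eta_\varepsilon''\|_{L^\infty}\le C\varepsilon^{-1}$. ($L_\varepsilon$ is the Lagrangian $L(v)=\frac{i}{2}\varepsilon\int\eta_\varepsilon^2(v\bar v_t-\bar v v_t)dx+\varepsilon^2\int\eta_\varepsilon^2|v_x|^2dx+\frac12\int\eta_\varepsilon^4(1-|v|^2)^2dx$ evaluated on the dark-soliton ansatz $v=\sqrt{1-b^2}\tanh(\varepsilon^{-1}B(x-a))+ib$.) *)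

theory Defs
  imports "HOL-Analysis.Analysis"
begin

definition eta0 :: "real \<Rightarrow> real" where
  "eta0 x = (if \<bar>x\<bar> < 1 then sqrt (1 - x^2) else 0)"

definition sech :: "real \<Rightarrow> real" where
  "sech z = 1 / cosh z"

definition smooth_real :: "(real \<Rightarrow> real) \<Rightarrow> bool" where
  "smooth_real f \<longleftrightarrow> (\<forall>n x. ((deriv ^^ n) f) differentiable (at x))"

definition eta_profile :: "real \<Rightarrow> (real \<Rightarrow> real) \<Rightarrow> bool" where
  "eta_profile \<epsilon> f \<longleftrightarrow>
     smooth_real f \<and> (\<forall>x. f x > 0) \<and>
     (\<forall>x. \<epsilon>^2 * deriv (deriv f) x + (1 - x^2 - (f x)^2) * f x = 0) \<and>
     (\<forall>c::real. ((\<lambda>x. f x * exp (c * \<bar>x\<bar>)) \<longlongrightarrow> 0) at_infinity)"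

text \<open>The reduced Lagrangian L_eps (with independent parameters ad, bd, Bd for the time derivatives).\<close>
definition Lagr :: "(real \<Rightarrow> real \<Rightarrow> real) \<Rightarrow> real \<Rightarrow> real \<Rightarrow> real \<Rightarrow> real \<Rightarrow> real \<Rightarrow> real \<Rightarrow> real \<Rightarrow> real" where
  "Lagr \<eta> \<epsilon> a b B ad bd Bd =
     (let z = (\<lambda>x. B * (x - a) / \<epsilon>) in
       \<epsilon> * bd / sqrt (1 - b^2) * (LBINT x. (\<eta> \<epsilon> x)^2 * tanh (z x))
     + b * sqrt (1 - b^2) * B * ad * (LBINT x. (\<eta> \<epsilon> x)^2 * (sech (z x))^2)
     - \<epsilon> * b * sqrt (1 - b^2) * Bd / B * (LBINT x. (\<eta> \<epsilon> x)^2 * z x * (sech (z x))^2)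
     + (1 - b^2) * B^2 * (LBINT x. (\<eta> \<epsilon> x)^2 * (sech (z x))^4)
     + 1/2 * (1 - b^2)^2 * (LBINT x. (\<eta> \<epsilon> x)^4 * (sech (z x))^4))"

end

theory Submission imports Defs "HOL-Probability.Sinc_Integral" begin


lemma dct_right0:
  fixes s :: "real \<Rightarrow> real \<Rightarrow> real" and w f :: "real \<Rightarrow> real"
  assumes fm: "f \<in> borel_measurable lborel" and wi: "integrable lborel w"
   and ev: "eventually (\<lambda>e. s e \<in> borel_measurable lborel \<and> (\<forall>x. \<bar>s e x\<bar> \<le> w x)) (at_right 0)"
   and lim: "AE x in lborel. ((\<lambda>e. s e x) \<longlongrightarrow> f x) (at_right 0)"
  shows "((\<lambda>e. integral\<^sup>L lborel (s e)) \<longlongrightarrow> integral\<^sup>L lborel f) (at_right 0)"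
proof -
  define P where "P e \<longleftrightarrow> s e \<in> borel_measurable lborel \<and> (\<forall>x. \<bar>s e x\<bar> \<le> w x)" for e
  define s' where "s' t = (if P (inverse t) then s (inverse t) else (\<lambda>_. 0))" for t
  have evt: "eventually (\<lambda>t. P (inverse t)) at_top"
    using ev unfolding eventually_at_right_to_top P_def by simp
  have m: "s' t \<in> borel_measurable lborel" for t
    unfolding s'_def P_def by auto
  have lim': "AE x in lborel. ((\<lambda>t. s' t x) \<longlongrightarrow> f x) at_top"
    using lim
  proof eventually_elim
    case (elim x)
    then have "((\<lambda>t. s (inverse t) x) \<longlongrightarrow> f x) at_top"
      using filterlim_at_right_to_top[THEN iffD1] by blast
    moreover have "eventually (\<lambda>t. s (inverse t) x = s' t x) at_top"
      using evt by eventually_elim (simp add: s'_def)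
    ultimately show ?case using tendsto_cong by fastforce
  qed
  have bd: "\<forall>\<^sub>F t in at_top. AE x in lborel. norm (s' t x) \<le> w x"
    using evt by eventually_elim (auto simp: s'_def P_def)
  have "((\<lambda>t. integral\<^sup>L lborel (s' t)) \<longlongrightarrow> integral\<^sup>L lborel f) at_top"
    by (rule integral_dominated_convergence_at_top[OF fm m wi lim' bd])
  moreover have "eventually (\<lambda>t. integral\<^sup>L lborel (s' t) = integral\<^sup>L lborel (s (inverse t))) at_top"
    using evt by eventually_elim (simp add: s'_def)
  ultimately have "((\<lambda>t. integral\<^sup>L lborel (s (inverse t))) \<longlongrightarrow> integral\<^sup>L lborel f) at_top"
    using tendsto_cong by fastforce
  then show ?thesis unfolding filterlim_at_right_to_top by simp
qed




lemma sech_sq: "(sech (y::real))^2 = 1 - (tanh y)^2"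
proof -
  have "cosh y ^ 2 - sinh y ^ 2 = 1" by (rule hyperbolic_pythagoras)
  moreover have "cosh y \<noteq> 0" by simp
  ultimately have "cosh y ^ 2 = 1 + sinh y ^ 2" by simp
  moreover have "1 + sinh y ^ 2 > 0" by (simp add: add_pos_nonneg)
  ultimately show ?thesis unfolding sech_def tanh_def
    by (simp add: field_simps)
qed

lemma cosh_lower: "(1 + (y::real)^2) / 4 \<le> (cosh y)^2"
proof -
  have "exp \<bar>y\<bar> / 2 \<le> cosh y"
    by (cases "y \<ge> 0") (auto simp: cosh_def)
  moreover have "1 + \<bar>y\<bar> \<le> exp \<bar>y\<bar>" by (rule exp_ge_add_one_self)
  ultimately have c: "(1 + \<bar>y\<bar>)/2 \<le> cosh y"
    by (smt (verit) divide_right_mono)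
  have "(1 + y^2)/4 \<le> ((1 + \<bar>y\<bar>)/2)^2"
    by (simp add: power2_eq_square field_simps)
  also have "\<dots> \<le> (cosh y)^2" using c by (intro power_mono) auto
  finally show ?thesis .
qed

lemma sech_sq_bound: "(sech (y::real))^2 \<le> 4 / (1 + y^2)"
proof -
  have p: "0 < (1 + y^2) / 4" by (simp add: add_pos_nonneg)
  have "(sech y)^2 = 1 / (cosh y)^2" by (simp add: sech_def power_divide)
  also have "\<dots> \<le> 1 / ((1 + y^2)/4)"
    using cosh_lower p by (intro divide_left_mono) auto
  finally show ?thesis by simp
qed

lemma sech_le1: "\<bar>sech (y::real)\<bar> \<le> 1"
  using cosh_real_ge_1[of y] by (simp add: sech_def)

lemma integrable_inv1: "integrable lborel (\<lambda>y::real. 1 / (1 + y^2))"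
proof -
  have "set_integrable lborel (einterval (-\<infinity>) \<infinity>) (\<lambda>x::real. inverse (1 + x^2))"
    by (rule integrable_inverse_1_plus_square)
  moreover have "einterval (-\<infinity>) \<infinity> = (UNIV :: real set)"
    by (auto simp: einterval_iff)
  ultimately show ?thesis by (simp add: set_integrable_def divide_inverse)
qed

lemma FTC_R:
  fixes f F :: "real \<Rightarrow> real"
  assumes F: "\<And>x. DERIV F x :> f x" and f: "\<And>x. isCont f x" and nn: "\<And>x. 0 \<le> f x"
    and A: "(F \<longlongrightarrow> A) at_bot" and B: "(F \<longlongrightarrow> B) at_top"
  shows "integrable lborel f" "integral\<^sup>L lborel f = B - A"
proof -
  have U: "einterval (-\<infinity>) \<infinity> = (UNIV :: real set)"
    by (auto simp: einterval_iff)
  have A': "((F \<circ> real_of_ereal) \<longlongrightarrow> A) (at_right (-\<infinity>))" using A by (simp add: ereal_tendsto_simps)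
  have B': "((F \<circ> real_of_ereal) \<longlongrightarrow> B) (at_left \<infinity>)" using B by (simp add: ereal_tendsto_simps)
  have r: "set_integrable lborel (einterval (-\<infinity>) \<infinity>) f" "(LBINT x=-\<infinity>..\<infinity>. f x) = B - A"
    using interval_integral_FTC_nonneg[of "-\<infinity>" \<infinity> F f A B] F f nn A' B' by auto
  show "integrable lborel f" using r(1) U by (simp add: set_integrable_def)
  show "integral\<^sup>L lborel f = B - A" using r(2) U
    by (simp add: interval_lebesgue_integral_def set_lebesgue_integral_def)
qed

lemma sech2_int: "integrable lborel (\<lambda>y. (sech y)^2)" "integral\<^sup>L lborel (\<lambda>y. (sech y)^2) = 2"
proof -
  have F: "DERIV tanh x :> (sech x)^2" for x :: real
  proof -
    have "DERIV tanh x :> 1 - (tanh x)^2" by (auto intro!: derivative_eq_intros)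
    then show ?thesis by (simp add: sech_sq)
  qed
  have c: "isCont (\<lambda>y. (sech y)^2) x" for x :: real
    unfolding sech_def by (intro continuous_intros) auto
  show "integrable lborel (\<lambda>y. (sech y)^2)"
    by (rule FTC_R(1)[OF F c _ tanh_real_at_bot tanh_real_at_top]) simp
  show "integral\<^sup>L lborel (\<lambda>y. (sech y)^2) = 2"
    using FTC_R(2)[OF F c _ tanh_real_at_bot tanh_real_at_top] by simp
qed

lemma sech4_int: "integrable lborel (\<lambda>y. (sech y)^4)" "integral\<^sup>L lborel (\<lambda>y. (sech y)^4) = 4/3"
proof -
  have F: "DERIV (\<lambda>x. tanh x - (tanh x)^3/3) x :> (sech x)^4" for x :: real
  proof -
    have "DERIV (\<lambda>x. tanh x - (tanh x)^3/3) x :> (1 - tanh x ^2) - 3 * tanh x ^ 2 * (1 - tanh x ^2) / 3"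
      by (auto intro!: derivative_eq_intros)
    moreover have "(sech x)^4 = ((sech x)^2)^2" by (simp flip: power_mult)
    moreover have "((sech x)^2)^2 = (1 - tanh x ^2)^2" by (simp only: sech_sq)
    moreover have "(1 - tanh x ^2) - 3 * tanh x ^ 2 * (1 - tanh x ^2) / 3 = (1 - tanh x ^2)^2"
      by (simp add: power2_eq_square field_simps)
    ultimately show ?thesis by simp
  qed
  have c: "isCont (\<lambda>y. (sech y)^4) x" for x :: real
    unfolding sech_def by (intro continuous_intros) auto
  have A: "((\<lambda>x::real. tanh x - (tanh x)^3/3) \<longlongrightarrow> (-1) - (-1)^3/3) at_bot"
    using tanh_real_at_bot by (intro tendsto_intros) auto
  have B: "((\<lambda>x::real. tanh x - (tanh x)^3/3) \<longlongrightarrow> 1 - 1^3/3) at_top"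
    using tanh_real_at_top by (intro tendsto_intros) auto
  show "integrable lborel (\<lambda>y. (sech y)^4)"
    by (rule FTC_R(1)[OF F c _ A B]) simp
  show "integral\<^sup>L lborel (\<lambda>y. (sech y)^4) = 4/3"
    using FTC_R(2)[OF F c _ A B] by simp
qed




lemma eta0_alt: "eta0 x = sqrt (max 0 (1 - x^2))"
proof (cases "\<bar>x\<bar> < 1")
  case True
  then have "x^2 < 1" by (simp add: abs_square_less_1)
  then show ?thesis using True by (simp add: eta0_def max_def)
next
  case False
  then have "1 \<le> \<bar>x\<bar>^2" using one_le_power[of "\<bar>x\<bar>" 2] by simp
  then have "1 \<le> x^2" by simp
  then show ?thesis using False by (simp add: eta0_def max_def)
qed

lemma eta0_sq: "(eta0 x)^2 = max 0 (1 - x^2)"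
  by (simp add: eta0_alt)

lemma eta0_cont: "continuous_on UNIV eta0"
  unfolding eta0_alt[abs_def] by (intro continuous_intros)

lemma eta0_le1: "\<bar>eta0 x\<bar> \<le> 1"
  by (simp add: eta0_alt max_def)

lemma f0_int:
  fixes a :: real assumes a: "-1 < a" "a < 1"
  shows "integral\<^sup>L lborel (\<lambda>x. (eta0 x)^2 * sgn (x - a)) = - 2 * (a - a^3/3)"
proof -
  let ?f = "\<lambda>x::real. 1 - x^2"
  have eq: "(eta0 x)^2 * sgn (x - a) = indicator {a..1} x *\<^sub>R ?f x - indicator {-1..a} x *\<^sub>R ?f x" for x
  proof -
    consider "x < -1" | "-1 \<le> x \<and> x < a" | "x = a" | "a < x \<and> x \<le> 1" | "1 < x" using a by linarith
    then show ?thesis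
    proof cases
      case 1
      then have "1 < x^2" using less_1_mult[of "-x" "-x"] by (simp add: power2_eq_square)
      then show ?thesis using 1 a by (simp add: eta0_sq indicator_def)
    next
      case 2
      then have "x^2 \<le> 1" using a by (auto simp add: abs_square_le_1)
      then show ?thesis using 2 by (simp add: eta0_sq indicator_def sgn_if)
    next
      case 3
      then show ?thesis using a by (simp add: indicator_def)
    next
      case 4
      then have "x^2 \<le> 1" using a by (auto simp add: abs_square_le_1)
      then show ?thesis using 4 a by (simp add: eta0_sq indicator_def sgn_if)
    next
      case 5
      then have "1 < x^2" using less_1_mult[of "x" "x"] by (simp add: power2_eq_square)
      then show ?thesis using 5 a by (simp add: eta0_sq indicator_def)
    qed
  qed
  have c: "continuous_on {u..v} ?f" for u v by (intro continuous_intros)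
  have i: "integrable lborel (\<lambda>x. indicator {u..v} x *\<^sub>R ?f x)" for u v
    using borel_integrable_atLeastAtMost'[OF c[of u v]] by (simp add: set_integrable_def)
  have D: "((\<lambda>x. x - x^3/3) has_vector_derivative ?f x) (at x within {u..v})" for x u v
  proof -
    have "((\<lambda>x::real. x - x^3/3) has_real_derivative ?f x) (at x)"
      by (auto intro!: derivative_eq_intros simp: power2_eq_square)
    then show ?thesis
      by (simp add: has_real_derivative_iff_has_vector_derivative has_vector_derivative_at_within)
  qed
  have I1: "integral\<^sup>L lborel (\<lambda>x. indicator {a..1} x *\<^sub>R ?f x) = (1 - 1^3/3) - (a - a^3/3)"
    by (rule integral_FTC_atLeastAtMost[OF _ D c]) (use a in auto)
  have I2: "integral\<^sup>L lborel (\<lambda>x. indicator {-1..a} x *\<^sub>R ?f x) = (a - a^3/3) - ((-1) - (-1)^3/3)"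
    by (rule integral_FTC_atLeastAtMost[OF _ D c]) (use a in auto)
  have "integral\<^sup>L lborel (\<lambda>x. (eta0 x)^2 * sgn (x - a)) =
        integral\<^sup>L lborel (\<lambda>x. indicator {a..1} x *\<^sub>R ?f x - indicator {-1..a} x *\<^sub>R ?f x)"
    by (simp only: eq)
  also have "\<dots> = integral\<^sup>L lborel (\<lambda>x. indicator {a..1} x *\<^sub>R ?f x) - integral\<^sup>L lborel (\<lambda>x. indicator {-1..a} x *\<^sub>R ?f x)"
    by (rule Bochner_Integration.integral_diff[OF i i])
  also have "\<dots> = - 2 * (a - a^3/3)" using I1 I2 by simp
  finally show ?thesis .
qed




lemma cont_meas: "continuous_on UNIV (f::real \<Rightarrow> real) \<Longrightarrow> f \<in> borel_measurable lborel"
  using borel_measurable_continuous_onI by simp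

lemma powr13_tendsto: "((\<lambda>e::real. C * e powr (1/3)) \<longlongrightarrow> 0) (at_right 0)"
proof -
  have "((\<lambda>e::real. e powr (1/3)) \<longlongrightarrow> 0) (at_right 0)"
  proof (rule tendsto_zero_powrI)
    show "\<forall>\<^sub>F x in at_right 0. 0 \<le> (x::real)"
      using eventually_at_right_less[of "0::real"] by (rule eventually_mono) simp
  qed (auto intro: tendsto_ident_at)
  then show ?thesis using tendsto_mult_right_zero by blast
qed

lemma tanh_inv_lim:
  fixes c :: real assumes "c \<noteq> 0"
  shows "((\<lambda>e. tanh (c / e)) \<longlongrightarrow> sgn c) (at_right 0)"
proof -
  have pos: "((\<lambda>e. tanh (d / e)) \<longlongrightarrow> 1) (at_right 0)" if d: "d > 0" for d :: real
  proof -
    have "filterlim (\<lambda>t::real. d * t) at_top at_top"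
      by (rule filterlim_tendsto_pos_mult_at_top[OF tendsto_const d filterlim_ident])
    then have "filterlim (\<lambda>e::real. d / e) at_top (at_right 0)"
      unfolding filterlim_at_right_to_top by (simp add: divide_inverse)
    then show ?thesis by (rule filterlim_compose[OF tanh_real_at_top])
  qed
  show ?thesis
  proof (cases "c > 0")
    case True then show ?thesis using pos[of c] by simp
  next
    case False
    then have "-c > 0" using assms by simp
    from tendsto_minus[OF pos[OF this]] have "((\<lambda>e. - tanh (-c / e)) \<longlongrightarrow> -1) (at_right 0)" .
    then show ?thesis using False assms by simp
  qed
qed

definition goodH :: "(real \<Rightarrow> real \<Rightarrow> real) \<Rightarrow> real \<Rightarrow> real \<Rightarrow> real \<Rightarrow> bool" where
  "goodH \<eta> K C e \<longleftrightarrow> 0 < e \<and> (\<forall>x. 0 < \<eta> e x \<and> \<eta> e x \<le> K / (1 + x^2)) \<and>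
      continuous_on UNIV (\<eta> e) \<and> (\<forall>x. \<bar>\<eta> e x - eta0 x\<bar> \<le> C * e powr (1/3))"

lemma unif_lim:
  assumes H: "eventually (goodH \<eta> K C) (at_right 0)"
    and g: "(g \<longlongrightarrow> t) (at_right 0)"
  shows "((\<lambda>e. \<eta> e (g e)) \<longlongrightarrow> eta0 t) (at_right 0)"
proof -
  have "((\<lambda>e. \<eta> e (g e) - eta0 (g e)) \<longlongrightarrow> 0) (at_right 0)"
    by (rule Lim_null_comparison[OF _ powr13_tendsto[of C]])
       (use H in \<open>eventually_elim, auto simp: goodH_def\<close>)
  moreover have "((\<lambda>e. eta0 (g e)) \<longlongrightarrow> eta0 t) (at_right 0)"
    using eta0_cont g by (metis continuous_on_eq_continuous_at isCont_tendsto_compose open_UNIV UNIV_I)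
  ultimately have "((\<lambda>e. (\<eta> e (g e) - eta0 (g e)) + eta0 (g e)) \<longlongrightarrow> 0 + eta0 t) (at_right 0)"
    by (rule tendsto_add)
  then show ?thesis by simp
qed

lemma K_bound: "K > 0 \<Longrightarrow> 0 < v \<Longrightarrow> v \<le> K / (1 + (x::real)^2) \<Longrightarrow> v \<le> K"
proof -
  assume K: "K > 0" and v: "0 < v" "v \<le> K / (1 + x^2)"
  have "K / (1 + x^2) \<le> K / 1" using K by (intro divide_left_mono) (auto simp: add_pos_nonneg)
  then show ?thesis using v by simp
qed

lemma K_bound2: "K > 0 \<Longrightarrow> 0 < v \<Longrightarrow> v \<le> K / (1 + x^2) \<Longrightarrow> v^2 \<le> K^2 * (1 / (1 + (x::real)^2))"
proof -
  assume K: "K > 0" and v: "0 < v" "v \<le> K / (1 + x^2)"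
  have p: "0 < 1 + x^2" by (simp add: add_pos_nonneg)
  have "v^2 \<le> (K / (1 + x^2))^2" using v by (intro power_mono) auto
  also have "\<dots> = K^2 * (1 / (1+x^2)) * (1 / (1+x^2))" by (simp add: power2_eq_square)
  also have "\<dots> \<le> K^2 * (1 / (1+x^2)) * 1"
    using p by (intro mult_left_mono) auto
  finally show ?thesis by simp
qed




lemma zsech: "\<bar>z * (sech z)^2\<bar> \<le> 2" "z \<noteq> 0 \<Longrightarrow> \<bar>z * (sech z)^2\<bar> \<le> 4 / \<bar>z\<bar>"
proof -
  have p: "0 < 1 + z^2" by (simp add: add_pos_nonneg)
  have "\<bar>z * (sech z)^2\<bar> = \<bar>z\<bar> * (sech z)^2" by (simp add: abs_mult)
  also have "\<dots> \<le> \<bar>z\<bar> * (4 / (1 + z^2))" by (intro mult_left_mono sech_sq_bound) auto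
  also have "\<dots> = 4 * \<bar>z\<bar> / (1 + z^2)" by simp
  finally have b: "\<bar>z * (sech z)^2\<bar> \<le> 4 * \<bar>z\<bar> / (1 + z^2)" .
  have sq: "z^2 = \<bar>z\<bar> * \<bar>z\<bar>" by (simp add: power2_eq_square)
  have "0 \<le> (\<bar>z\<bar> - 1) * (\<bar>z\<bar> - 1)" by simp
  then have "4 * \<bar>z\<bar> \<le> 2 * (1 + z^2)" unfolding sq by (simp add: algebra_simps)
  then have "4 * \<bar>z\<bar> / (1 + z^2) \<le> 2" by (simp only: pos_divide_le_eq[OF p])
  then show "\<bar>z * (sech z)^2\<bar> \<le> 2" using b by linarith
  assume z: "z \<noteq> 0"
  have "4 * \<bar>z\<bar> / (1 + z^2) \<le> 4 * \<bar>z\<bar> / z^2"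
    by (rule frac_le) (use z in auto)
  also have "\<dots> = 4 / \<bar>z\<bar>" using z by (simp add: power2_eq_square field_simps abs_mult_self_eq)
  finally show "\<bar>z * (sech z)^2\<bar> \<le> 4 / \<bar>z\<bar>" using b by linarith
qed

lemma T1:
  assumes H: "eventually (goodH \<eta> K C) (at_right 0)" and K: "K > 0" and B: "B > 0"
    and a: "-1 < a" "a < 1"
  shows "((\<lambda>e. LBINT x. (\<eta> e x)^2 * tanh (B * (x - a) / e)) \<longlongrightarrow> -2 * (a - a^3/3)) (at_right 0)"
proof -
  have "((\<lambda>e. LBINT x. (\<eta> e x)^2 * tanh (B * (x - a) / e)) \<longlongrightarrow>
          integral\<^sup>L lborel (\<lambda>x. (eta0 x)^2 * sgn (x - a))) (at_right 0)"
  proof (rule dct_right0[where w="\<lambda>x. K^2 * (1 / (1 + x^2))"])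
    have [measurable]: "eta0 \<in> borel_measurable lborel" by (rule cont_meas[OF eta0_cont])
    show "(\<lambda>x. (eta0 x)^2 * sgn (x - a)) \<in> borel_measurable lborel" by measurable
    show "integrable lborel (\<lambda>x. K^2 * (1 / (1 + x^2)))"
      using integrable_inv1 by (rule integrable_mult_right)
    show "\<forall>\<^sub>F e in at_right 0. (\<lambda>x. (\<eta> e x)^2 * tanh (B * (x - a) / e)) \<in> borel_measurable lborel \<and>
            (\<forall>x. \<bar>(\<eta> e x)^2 * tanh (B * (x - a) / e)\<bar> \<le> K^2 * (1 / (1 + x^2)))"
      using H
    proof eventually_elim
      case (elim e)
      then have c: "continuous_on UNIV (\<eta> e)" and pos: "\<And>x. 0 < \<eta> e x"
        and le: "\<And>x. \<eta> e x \<le> K / (1 + x^2)" by (auto simp: goodH_def)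
      have e: "0 < e" using elim by (simp add: goodH_def)
      have "continuous_on UNIV (\<lambda>x. (\<eta> e x)^2 * tanh (B * (x - a) / e))"
        by (intro continuous_intros c) (use e in auto)
      moreover have "\<bar>(\<eta> e x)^2 * tanh (B * (x - a) / e)\<bar> \<le> K^2 * (1 / (1 + x^2))" for x
      proof -
        have "\<bar>tanh (B * (x - a) / e)\<bar> \<le> 1" using tanh_real_bounds[of "B * (x - a) / e"] by auto
        then have "\<bar>(\<eta> e x)^2 * tanh (B * (x - a) / e)\<bar> \<le> (\<eta> e x)^2"
          by (simp add: abs_mult mult_left_le)
        also have "\<dots> \<le> K^2 * (1 / (1 + x^2))" by (rule K_bound2[OF K pos le])
        finally show ?thesis .
      qed
      ultimately show ?case by (simp add: borel_measurable_continuous_onI)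
    qed
    show "AE x in lborel. ((\<lambda>e. (\<eta> e x)^2 * tanh (B * (x - a) / e)) \<longlongrightarrow> (eta0 x)^2 * sgn (x - a)) (at_right 0)"
      using AE_lborel_singleton[of a]
    proof eventually_elim
      case (elim x)
      have "((\<lambda>e. \<eta> e x) \<longlongrightarrow> eta0 x) (at_right 0)"
        using unif_lim[OF H, of "\<lambda>_. x" x] by simp
      moreover have "((\<lambda>e. tanh (B * (x - a) / e)) \<longlongrightarrow> sgn (B * (x - a))) (at_right 0)"
        by (rule tanh_inv_lim) (use elim B in auto)
      moreover have "sgn (B * (x - a)) = sgn (x - a)" using B by (simp add: sgn_mult)
      ultimately show ?case by (auto intro!: tendsto_intros)
    qed
  qed
  then show ?thesis using f0_int a by simp
qed

lemma T3:
  assumes H: "eventually (goodH \<eta> K C) (at_right 0)" and K: "K > 0" and B: "B > 0"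
  shows "((\<lambda>e. LBINT x. (\<eta> e x)^2 * (B * (x - a) / e) * (sech (B * (x - a) / e))^2) \<longlongrightarrow> 0) (at_right 0)"
proof -
  have "((\<lambda>e. LBINT x. (\<eta> e x)^2 * (B * (x - a) / e) * (sech (B * (x - a) / e))^2) \<longlongrightarrow>
          integral\<^sup>L lborel (\<lambda>x::real. 0::real)) (at_right 0)"
  proof (rule dct_right0[where w="\<lambda>x. 2 * K^2 * (1 / (1 + x^2))" and f="\<lambda>x::real. 0::real"
      and s="\<lambda>e x. (\<eta> e x)^2 * (B * (x - a) / e) * (sech (B * (x - a) / e))^2"])
    show "(\<lambda>x::real. 0::real) \<in> borel_measurable lborel" by simp
    show "integrable lborel (\<lambda>x. 2 * K^2 * (1 / (1 + x^2)))"
      using integrable_inv1 by (rule integrable_mult_right)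
    show "\<forall>\<^sub>F e in at_right 0. (\<lambda>x. (\<eta> e x)^2 * (B * (x - a) / e) * (sech (B * (x - a) / e))^2) \<in> borel_measurable lborel \<and>
            (\<forall>x. \<bar>(\<eta> e x)^2 * (B * (x - a) / e) * (sech (B * (x - a) / e))^2\<bar> \<le> 2 * K^2 * (1 / (1 + x^2)))"
      using H
    proof eventually_elim
      case (elim e)
      then have c: "continuous_on UNIV (\<eta> e)" and pos: "\<And>x. 0 < \<eta> e x"
        and le: "\<And>x. \<eta> e x \<le> K / (1 + x^2)" by (auto simp: goodH_def)
      have "continuous_on UNIV (\<lambda>x. (\<eta> e x)^2 * (B * (x - a) / e) * (sech (B * (x - a) / e))^2)"
      proof -
        have e: "e \<noteq> 0" using elim by (simp add: goodH_def)
        show ?thesis unfolding sech_def by (intro continuous_intros c) (simp_all add: e)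
      qed
      moreover have "\<bar>(\<eta> e x)^2 * (B * (x - a) / e) * (sech (B * (x - a) / e))^2\<bar> \<le> 2 * K^2 * (1 / (1 + x^2))" for x
      proof -
        have "\<bar>(\<eta> e x)^2 * (B * (x - a) / e) * (sech (B * (x - a) / e))^2\<bar>
              = (\<eta> e x)^2 * \<bar>(B * (x - a) / e) * (sech (B * (x - a) / e))^2\<bar>"
          by (simp add: abs_mult)
        also have "\<dots> \<le> (K^2 * (1 / (1 + x^2))) * 2"
        proof (rule mult_mono[OF K_bound2[OF K pos le] zsech(1)])
          show "0 \<le> K^2 * (1 / (1 + x^2))" by (simp add: add_pos_nonneg less_imp_le)
        qed simp
        also have "\<dots> = 2 * K^2 * (1 / (1 + x^2))" by simp
        finally show ?thesis .
      qed
      ultimately show ?case by (simp add: borel_measurable_continuous_onI)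
    qed
    show "AE x in lborel. ((\<lambda>e. (\<eta> e x)^2 * (B * (x - a) / e) * (sech (B * (x - a) / e))^2) \<longlongrightarrow> 0) (at_right 0)"
      using AE_lborel_singleton[of a]
    proof eventually_elim
      case (elim x)
      have d: "0 < B * \<bar>x - a\<bar>" using elim B by simp
      show ?case
      proof (rule Lim_null_comparison)
        show "((\<lambda>e. K^2 * (4 / (B * \<bar>x - a\<bar>)) * e) \<longlongrightarrow> 0) (at_right 0)"
          by (rule tendsto_mult_right_zero[OF tendsto_ident_at])
        show "\<forall>\<^sub>F e in at_right 0. norm ((\<eta> e x)^2 * (B * (x - a) / e) * (sech (B * (x - a) / e))^2)
                 \<le> K^2 * (4 / (B * \<bar>x - a\<bar>)) * e"
          using H
        proof eventually_elim
          case (elim e)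
          then have e: "0 < e" and pos: "0 < \<eta> e x" and le: "\<eta> e x \<le> K / (1 + x^2)"
            by (auto simp: goodH_def)
          have z: "B * (x - a) / e \<noteq> 0" using e B \<open>x \<noteq> a\<close> by simp
          have "norm ((\<eta> e x)^2 * (B * (x - a) / e) * (sech (B * (x - a) / e))^2)
                = (\<eta> e x)^2 * \<bar>(B * (x - a) / e) * (sech (B * (x - a) / e))^2\<bar>"
            by (simp add: abs_mult)
          also have "\<dots> \<le> K^2 * (4 / \<bar>B * (x - a) / e\<bar>)"
          proof (rule mult_mono[OF _ zsech(2)[OF z]])
            show "(\<eta> e x)^2 \<le> K^2" using K_bound[OF K pos le] pos by (intro power_mono) auto
          qed (simp_all add: K less_imp_le)
          also have "4 / \<bar>B * (x - a) / e\<bar> = (4 / (B * \<bar>x - a\<bar>)) * e"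
            using e B by (simp add: abs_mult)
          finally show ?case by (simp add: mult.assoc)
        qed
      qed
    qed
  qed
  then show ?thesis by simp
qed

lemma Tsc:
  fixes h :: "real \<Rightarrow> real"
  assumes H: "eventually (goodH \<eta> K C) (at_right 0)" and K: "K > 0" and B: "B > 0"
    and hc: "continuous_on UNIV h" and hi: "integrable lborel h"
  shows "((\<lambda>e. (LBINT x. (\<eta> e x)^p * h (B * (x - a) / e)) / e) \<longlongrightarrow> (eta0 a)^p * integral\<^sup>L lborel h / B) (at_right 0)"
proof -
  have eq: "(LBINT x. (\<eta> e x)^p * h (B * (x - a) / e)) / e = (1/B) * (LBINT y. (\<eta> e (a + (e/B)*y))^p * h y)"
    if e: "e > 0" for e
  proof -
    have "(LBINT x. (\<eta> e x)^p * h (B * (x - a) / e)) =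
          \<bar>e/B\<bar> *\<^sub>R (LBINT y. (\<eta> e (a + (e/B)*y))^p * h (B * ((a + (e/B)*y) - a) / e))"
      by (rule lborel_integral_real_affine) (use e B in auto)
    also have "(\<lambda>y. (\<eta> e (a + (e/B)*y))^p * h (B * ((a + (e/B)*y) - a) / e)) = (\<lambda>y. (\<eta> e (a + (e/B)*y))^p * h y)"
      using e B by (simp add: field_simps)
    finally show ?thesis using e B by simp
  qed
  have lim: "((\<lambda>e. LBINT y. (\<eta> e (a + (e/B)*y))^p * h y) \<longlongrightarrow> integral\<^sup>L lborel (\<lambda>y. (eta0 a)^p * h y)) (at_right 0)"
  proof (rule dct_right0[where w="\<lambda>y. K^p * \<bar>h y\<bar>"])
    show "(\<lambda>y. (eta0 a)^p * h y) \<in> borel_measurable lborel"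
      by (rule cont_meas) (intro continuous_intros hc)
    show "integrable lborel (\<lambda>y. K^p * \<bar>h y\<bar>)"
      using integrable_abs[OF hi] by (rule integrable_mult_right)
    show "\<forall>\<^sub>F e in at_right 0. (\<lambda>y. (\<eta> e (a + (e/B)*y))^p * h y) \<in> borel_measurable lborel \<and>
            (\<forall>y. \<bar>(\<eta> e (a + (e/B)*y))^p * h y\<bar> \<le> K^p * \<bar>h y\<bar>)"
      using H
    proof eventually_elim
      case (elim e)
      then have c: "continuous_on UNIV (\<eta> e)" and pos: "\<And>x. 0 < \<eta> e x"
        and le: "\<And>x. \<eta> e x \<le> K / (1 + x^2)" by (auto simp: goodH_def)
      have c2: "continuous_on UNIV (\<lambda>y. \<eta> e (a + (e/B)*y))"
        by (rule continuous_on_compose2[OF c]) (intro continuous_intros, simp)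
      have "continuous_on UNIV (\<lambda>y. (\<eta> e (a + (e/B)*y))^p * h y)"
        by (intro continuous_intros c2 hc)
      moreover have "\<bar>(\<eta> e (a + (e/B)*y))^p * h y\<bar> \<le> K^p * \<bar>h y\<bar>" for y
      proof -
        have "(\<eta> e (a + (e/B)*y))^p \<le> K^p"
          using K_bound[OF K pos le] pos by (intro power_mono) (auto intro: less_imp_le)
        moreover have "0 \<le> (\<eta> e (a + (e/B)*y))^p" using pos by (simp add: less_imp_le)
        ultimately show ?thesis by (simp add: abs_mult mult_right_mono)
      qed
      ultimately show ?case by (simp add: borel_measurable_continuous_onI)
    qed
    show "AE y in lborel. ((\<lambda>e. (\<eta> e (a + (e/B)*y))^p * h y) \<longlongrightarrow> (eta0 a)^p * h y) (at_right 0)"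
    proof (rule AE_I2)
      fix y
      have g: "((\<lambda>e. a + (e/B)*y) \<longlongrightarrow> a + (0/B)*y) (at_right 0)"
        by (intro tendsto_intros tendsto_ident_at) (use B in simp)
      have "((\<lambda>e. \<eta> e (a + (e/B)*y)) \<longlongrightarrow> eta0 a) (at_right 0)"
        using unif_lim[OF H g] by simp
      then show "((\<lambda>e. (\<eta> e (a + (e/B)*y))^p * h y) \<longlongrightarrow> (eta0 a)^p * h y) (at_right 0)"
        by (intro tendsto_intros)
    qed
  qed
  have "((\<lambda>e. (1/B) * (LBINT y. (\<eta> e (a + (e/B)*y))^p * h y)) \<longlongrightarrow> (1/B) * integral\<^sup>L lborel (\<lambda>y. (eta0 a)^p * h y)) (at_right 0)"
    by (intro tendsto_intros lim)
  moreover have "eventually (\<lambda>e. (1/B) * (LBINT y. (\<eta> e (a + (e/B)*y))^p * h y) = (LBINT x. (\<eta> e x)^p * h (B * (x - a) / e)) / e) (at_right 0)"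
    using eventually_at_right_less[of "0::real"] by (rule eventually_mono) (simp add: eq)
  ultimately have "((\<lambda>e. (LBINT x. (\<eta> e x)^p * h (B * (x - a) / e)) / e) \<longlongrightarrow> (1/B) * integral\<^sup>L lborel (\<lambda>y. (eta0 a)^p * h y)) (at_right 0)"
    using tendsto_cong by fastforce
  then show ?thesis by simp
qed




lemma bound_big:
  fixes e C v d x :: real
  assumes e: "0 < e" "e < 1" and C: "C > 0" and v: "v > 0"
    and ode: "e^2 * d + (1 - x^2 - v^2) * v = 0" and dd: "\<bar>d\<bar> \<le> C / e" and x: "4 < x^2"
  shows "v \<le> 5 * (1 + C) / (1 + x^2)"
proof -
  have "0 \<le> v^2 * v" using v by simp
  then have "(x^2 - 1) * v \<le> e^2 * d" using ode by (simp add: algebra_simps)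
  also have "e^2 * d \<le> e^2 * (C / e)" using dd by (intro mult_left_mono) auto
  also have "e^2 * (C / e) = e * C" using e by (simp add: power2_eq_square)
  also have "e * C \<le> 1 * C" using e C by (intro mult_right_mono) auto
  finally have m: "(x^2 - 1) * v \<le> C" by simp
  have x1: "0 < x^2 - 1" using x by simp
  have vb: "v \<le> C / (x^2 - 1)" using m x1 by (simp add: pos_le_divide_eq mult.commute)
  have p: "0 < 1 + x^2" using x by simp
  have "1 + x^2 \<le> 5 * (x^2 - 1)" using x by simp
  then have "C * (1 + x^2) \<le> C * (5 * (x^2 - 1))" using C by (intro mult_left_mono) auto
  also have "\<dots> \<le> (1 + C) * (5 * (x^2 - 1))" using x1 by (intro mult_right_mono) auto
  also have "\<dots> = 5 * (1 + C) * (x^2 - 1)" by (simp only: mult_ac)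
  finally have "C * (1 + x^2) \<le> 5 * (1 + C) * (x^2 - 1)" .
  then have "C / (x^2 - 1) \<le> 5 * (1 + C) / (1 + x^2)"
    using x1 p by (simp add: frac_le_eq, intro divide_nonpos_pos, simp_all)
  then show ?thesis using vb by linarith
qed

lemma bound_small:
  fixes e C v x :: real
  assumes e: "0 < e" "e < 1" and C: "C > 0"
    and g: "\<bar>v - eta0 x\<bar> \<le> C * e powr (1/3)" and x: "x^2 \<le> 4"
  shows "v \<le> 5 * (1 + C) / (1 + x^2)"
proof -
  have "e powr (1/3) \<le> 1" using e by (intro powr_le1) auto
  then have "C * e powr (1/3) \<le> C" using C by (simp add: mult_left_le)
  then have v1: "v \<le> 1 + C" using g eta0_le1[of x] by linarith
  have p: "0 < 1 + x^2" by (simp add: add_pos_nonneg)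
  have "(1 + C) * (1 + x^2) \<le> (1 + C) * 5" using x C by (intro mult_left_mono) auto
  then have "1 + C \<le> 5 * (1 + C) / (1 + x^2)" using p by (simp add: pos_le_divide_eq mult.commute)
  then show ?thesis using v1 by linarith
qed

lemma smooth_cont: "smooth_real f \<Longrightarrow> continuous_on UNIV f"
proof -
  assume "smooth_real f"
  then have "\<And>x. f differentiable (at x)" unfolding smooth_real_def
    by (metis funpow_0)
  then show ?thesis by (intro continuous_at_imp_continuous_on) (auto intro: differentiable_imp_continuous_within)
qed

lemma get_good:
  fixes \<eta> :: "real \<Rightarrow> real \<Rightarrow> real"
  assumes profile: "eventually (\<lambda>\<epsilon>. eta_profile \<epsilon> (\<eta> \<epsilon>)) (at_right 0)"
    and global: "\<exists>C>0. eventually (\<lambda>\<epsilon>. \<forall>x.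
            \<bar>\<eta> \<epsilon> x - eta0 x\<bar> \<le> C * \<epsilon> powr (1/3) \<and>
            \<bar>deriv (\<eta> \<epsilon>) x\<bar> \<le> C * \<epsilon> powr (-1/3) \<and>
            \<bar>deriv (deriv (\<eta> \<epsilon>)) x\<bar> \<le> C / \<epsilon>) (at_right 0)"
  shows "\<exists>K C. K > 0 \<and> eventually (goodH \<eta> K C) (at_right 0)"
proof -
  obtain C where C: "C > 0" and G: "eventually (\<lambda>\<epsilon>. \<forall>x.
            \<bar>\<eta> \<epsilon> x - eta0 x\<bar> \<le> C * \<epsilon> powr (1/3) \<and>
            \<bar>deriv (\<eta> \<epsilon>) x\<bar> \<le> C * \<epsilon> powr (-1/3) \<and>
            \<bar>deriv (deriv (\<eta> \<epsilon>)) x\<bar> \<le> C / \<epsilon>) (at_right 0)"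
    using global by blast
  have e1: "eventually (\<lambda>e::real. e < 1) (at_right 0)"
    using order_tendstoD(2)[OF tendsto_ident_at[of "0::real" "{0<..}"], of 1] by simp
  have e0: "eventually (\<lambda>e::real. 0 < e) (at_right 0)" by (rule eventually_at_right_less)
  have "eventually (goodH \<eta> (5 * (1 + C)) C) (at_right 0)"
    using profile G e0 e1
  proof eventually_elim
    case (elim e)
    then have pr: "smooth_real (\<eta> e)" "\<And>x. \<eta> e x > 0"
      "\<And>x. e^2 * deriv (deriv (\<eta> e)) x + (1 - x^2 - (\<eta> e x)^2) * \<eta> e x = 0"
      unfolding eta_profile_def by auto
    have bd: "\<eta> e x \<le> 5 * (1 + C) / (1 + x^2)" for x
    proof (cases "x^2 \<le> 4")
      case True then show ?thesis using bound_small[of e C "\<eta> e x" x] elim C by auto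
    next
      case False then show ?thesis
        using bound_big[of e C "\<eta> e x" "deriv (deriv (\<eta> e)) x" x] elim C pr by auto
    qed
    show ?case unfolding goodH_def using elim pr bd smooth_cont[OF pr(1)] by auto
  qed
  then show ?thesis using C by (intro exI[of _ "5 * (1 + C)"] exI[of _ C]) auto
qed




theorem lemma1:
  fixes \<eta> :: "real \<Rightarrow> real \<Rightarrow> real"
    and a b B ad bd Bd :: real
  assumes profile: "eventually (\<lambda>\<epsilon>. eta_profile \<epsilon> (\<eta> \<epsilon>)) (at_right 0)"
    and pointwise: "\<And>x. ((\<lambda>\<epsilon>. \<eta> \<epsilon> x) \<longlongrightarrow> eta0 x) (at_right 0)"
    and C1_local: "\<And>K. compact K \<Longrightarrow> K \<subseteq> {-1<..<1} \<Longrightarrow>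
        \<exists>C>0. eventually (\<lambda>\<epsilon>. \<forall>x\<in>K.
            \<bar>\<eta> \<epsilon> x - eta0 x\<bar> \<le> C * \<epsilon>^2 \<and>
            \<bar>deriv (\<eta> \<epsilon>) x - deriv eta0 x\<bar> \<le> C * \<epsilon>^2) (at_right 0)"
    and global: "\<exists>C>0. eventually (\<lambda>\<epsilon>. \<forall>x.
            \<bar>\<eta> \<epsilon> x - eta0 x\<bar> \<le> C * \<epsilon> powr (1/3) \<and>
            \<bar>deriv (\<eta> \<epsilon>) x\<bar> \<le> C * \<epsilon> powr (-1/3) \<and>
            \<bar>deriv (deriv (\<eta> \<epsilon>)) x\<bar> \<le> C / \<epsilon>) (at_right 0)"
    and B: "B > 0" and a: "a \<in> {-1<..<1}" and b: "b \<in> {-1<..<1}"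
  shows "((\<lambda>\<epsilon>. Lagr \<eta> \<epsilon> a b B ad bd Bd / (2 * \<epsilon>)) \<longlongrightarrow>
           - bd / sqrt (1 - b^2) * (a - a^3 / 3)
           + b * sqrt (1 - b^2) * (1 - a^2) * ad
           + 2/3 * (1 - a^2) * (1 - b^2) * B
           + 1 / (3 * B) * (1 - a^2)^2 * (1 - b^2)^2) (at_right 0)"
proof -
  obtain K C where K: "K > 0" and H: "eventually (goodH \<eta> K C) (at_right 0)"
    using get_good[OF profile global] by blast
  have a1: "-1 < a" "a < 1" using a by auto
  define S where "S = sqrt (1 - b^2)"
  define I1 where "I1 e = (LBINT x. (\<eta> e x)^2 * tanh (B * (x - a) / e))" for e
  define I2 where "I2 e = (LBINT x. (\<eta> e x)^2 * (sech (B * (x - a) / e))^2)" for e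
  define I3 where "I3 e = (LBINT x. (\<eta> e x)^2 * (B * (x - a) / e) * (sech (B * (x - a) / e))^2)" for e
  define I4 where "I4 e = (LBINT x. (\<eta> e x)^2 * (sech (B * (x - a) / e))^4)" for e
  define I5 where "I5 e = (LBINT x. (\<eta> e x)^4 * (sech (B * (x - a) / e))^4)" for e
  have hc2: "continuous_on UNIV (\<lambda>y::real. (sech y)^2)"
    unfolding sech_def by (intro continuous_intros) auto
  have hc4: "continuous_on UNIV (\<lambda>y::real. (sech y)^4)"
    unfolding sech_def by (intro continuous_intros) auto
  have L1: "(I1 \<longlongrightarrow> -2 * (a - a^3/3)) (at_right 0)"
    unfolding I1_def[abs_def] by (rule T1[OF H K B a1])
  have L2: "((\<lambda>e. I2 e / e) \<longlongrightarrow> (eta0 a)^2 * 2 / B) (at_right 0)"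
    unfolding I2_def using Tsc[OF H K B hc2 sech2_int(1), of 2 a] by (simp add: sech2_int(2))
  have L3: "(I3 \<longlongrightarrow> 0) (at_right 0)"
    unfolding I3_def[abs_def] by (rule T3[OF H K B])
  have L4: "((\<lambda>e. I4 e / e) \<longlongrightarrow> (eta0 a)^2 * (4/3) / B) (at_right 0)"
    unfolding I4_def using Tsc[OF H K B hc4 sech4_int(1), of 2 a] by (simp add: sech4_int(2))
  have L5: "((\<lambda>e. I5 e / e) \<longlongrightarrow> (eta0 a)^4 * (4/3) / B) (at_right 0)"
    unfolding I5_def using Tsc[OF H K B hc4 sech4_int(1), of 4 a] by (simp add: sech4_int(2))
  have eq: "Lagr \<eta> e a b B ad bd Bd / (2 * e) =
      bd / (2 * S) * I1 e + b * S * B * ad / 2 * (I2 e / e) - b * S * Bd / (2 * B) * I3 e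
      + (1 - b^2) * B^2 / 2 * (I4 e / e) + (1 - b^2)^2 / 4 * (I5 e / e)" if e: "e > 0" for e
    unfolding Lagr_def Let_def I1_def I2_def I3_def I4_def I5_def S_def
    using e B by (simp add: field_simps)
  have lim: "((\<lambda>e. bd / (2 * S) * I1 e + b * S * B * ad / 2 * (I2 e / e) - b * S * Bd / (2 * B) * I3 e
      + (1 - b^2) * B^2 / 2 * (I4 e / e) + (1 - b^2)^2 / 4 * (I5 e / e)) \<longlongrightarrow>
      bd / (2 * S) * (-2 * (a - a^3/3)) + b * S * B * ad / 2 * ((eta0 a)^2 * 2 / B) - b * S * Bd / (2 * B) * 0
      + (1 - b^2) * B^2 / 2 * ((eta0 a)^2 * (4/3) / B) + (1 - b^2)^2 / 4 * ((eta0 a)^4 * (4/3) / B)) (at_right 0)"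
    by (intro tendsto_intros L1 L2 L3 L4 L5)
  have e2: "(eta0 a)^2 = 1 - a^2" using a1 by (simp add: eta0_sq abs_square_le_1 max_def)
  have e4: "(eta0 a)^4 = (1 - a^2)^2" using e2 by (metis power2_eq_square power4_eq_xxxx mult.assoc)
  have val: "bd / (2 * S) * (-2 * (a - a^3/3)) + b * S * B * ad / 2 * ((eta0 a)^2 * 2 / B) - b * S * Bd / (2 * B) * 0
      + (1 - b^2) * B^2 / 2 * ((eta0 a)^2 * (4/3) / B) + (1 - b^2)^2 / 4 * ((eta0 a)^4 * (4/3) / B)
      = - bd / sqrt (1 - b^2) * (a - a^3 / 3)
           + b * sqrt (1 - b^2) * (1 - a^2) * ad
           + 2/3 * (1 - a^2) * (1 - b^2) * B
           + 1 / (3 * B) * (1 - a^2)^2 * (1 - b^2)^2"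
  proof -
    have "b^2 < 1" using b by (auto simp: abs_square_less_1)
    then have Sp: "S > 0" unfolding S_def by simp
    have sb: "1 - b^2 = S^2" unfolding S_def using \<open>b^2 < 1\<close> by simp
    show ?thesis unfolding e2 e4 S_def[symmetric] sb using B Sp by (simp add: field_simps power2_eq_square)
  qed
  have ev: "eventually (\<lambda>e. bd / (2 * S) * I1 e + b * S * B * ad / 2 * (I2 e / e) - b * S * Bd / (2 * B) * I3 e
      + (1 - b^2) * B^2 / 2 * (I4 e / e) + (1 - b^2)^2 / 4 * (I5 e / e) = Lagr \<eta> e a b B ad bd Bd / (2 * e)) (at_right 0)"
    using eventually_at_right_less[of "0::real"] by (rule eventually_mono) (simp add: eq)
  show ?thesis using tendsto_cong[OF ev] lim val by simp
qed


end
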